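(* Let $g$ be a Möbius transformation of the Riemann sphere with $g(\overline{\mathbb D_1})\subset\mathbb D_1$. Then $g^\top(\overline{\mathbb D_1})\subset\mathbb D_1$.
   Context: $\mathbb D_t=\{z\in\mathbb C:|z|<t\}$. For a Möbius transformation $g(x)=\frac{ax+b}{cx+d}$ ($ad-bc\ne0$), its "transpose" is the Möbius transformation $g^\top(x)=\frac{ax+c}{bx+d}$. *)

theory Defs
  imports "HOL-Analysis.Analysis"
begin

text \<open>The Moebius map g(z) = (a z + b)/(c z + d) (with a d - b c \<noteq> 0) acting on the Riemann
  sphere maps the closed unit disk into the open unit disk iff no point of the closed disk
  is sent to \<infinity> (i.e. c z + d \<noteq> 0 there) and the finite image lies in the open disk.
  (Points z = \<infinity> are not in the closed disk.)\<close>
definition moebius_maps_cdisc_into_disc :: "complex \<Rightarrow> complex \<Rightarrow> complex \<Rightarrow> complex \<Rightarrow> bool" where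
  "moebius_maps_cdisc_into_disc a b c d \<longleftrightarrow>
     (\<forall>z\<in>cball 0 1. c * z + d \<noteq> 0 \<and> moebius a b c d z \<in> ball 0 1)"

end

theory Submission
  imports Defs
begin

theorem lemma3p8:
  fixes a b c d :: complex
  assumes "a * d - b * c \<noteq> 0"
    and "moebius_maps_cdisc_into_disc a b c d"
  shows "moebius_maps_cdisc_into_disc a c b d"
  unfolding moebius_maps_cdisc_into_disc_def
proof
  fix z :: complex assume z: "z \<in> cball 0 1"
  have H: "\<And>u. cmod u \<le> 1 \<Longrightarrow> c * u + d \<noteq> 0 \<and> cmod (a*u+b) < cmod (c*u+d)"
  proof -
    fix u :: complex assume "cmod u \<le> 1"
    then have "c * u + d \<noteq> 0 \<and> cmod ((a*u+b)/(c*u+d)) < 1"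
      using assms(2) by (auto simp: moebius_maps_cdisc_into_disc_def moebius_def)
    then show "c * u + d \<noteq> 0 \<and> cmod (a*u+b) < cmod (c*u+d)"
      by (auto simp: norm_divide divide_less_eq)
  qed
  have zn: "cmod z \<le> 1" using z by simp
  show "b * z + d \<noteq> 0 \<and> moebius a c b d z \<in> ball 0 1"
  proof (rule ccontr)
    assume ne: "\<not> ?thesis"
    have ge: "cmod (a*z+c) \<ge> cmod (b*z+d)"
    proof (cases "b * z + d = 0")
      case False
      with ne have "cmod ((a*z+c)/(b*z+d)) \<ge> 1" by (auto simp: moebius_def)
      with False show ?thesis by (simp add: norm_divide le_divide_eq)
    qed simp
    have nz: "a*z+c \<noteq> 0"
    proof
      assume h: "a*z+c = 0"
      with ge have h2: "b*z+d = 0" by simp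
      have "a * d - b * c = a*(b*z+d) - b*(a*z+c)" by (simp add: algebra_simps)
      with h h2 assms(1) show False by simp
    qed
    define u where "u = - (b*z+d)/(a*z+c)"
    have "cmod u = cmod (b*z+d) / cmod (a*z+c)"
      unfolding u_def by (simp only: norm_divide norm_minus_cancel)
    then have "cmod u \<le> 1" using ge nz by (simp add: divide_le_eq)
    from H[OF this] have Hu: "cmod (a*u+b) < cmod (c*u+d)" by simp
    have e1: "a*u+b = (b*c - a*d)/(a*z+c)" using nz
      by (simp add: u_def field_simps)
    have e2: "c*u+d = (a*d - b*c)*z/(a*z+c)" using nz
      by (simp add: u_def field_simps)
    have "cmod (b*c - a*d) = cmod (a*d-b*c)" by (metis norm_minus_commute)
    with Hu e1 e2 nz have "cmod (a*d-b*c) < cmod (a*d-b*c) * cmod z"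
      by (simp add: norm_divide norm_mult divide_less_eq)
    then have lt: "cmod (a*d-b*c) * 1 < cmod (a*d-b*c) * cmod z" by simp
    have p: "0 < cmod (a*d-b*c)" using assms(1) by simp
    from lt have "1 < cmod z" by (simp only: mult_less_cancel_left_pos[OF p])
    with zn show False by simp
  qed
qed

end
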